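(* Let $s\ge0$ and $\varepsilon\in(0,1/2)$. Then for every $t\in\mathbb{R}$ the multilinear operator $B_4$ defined in the context maps $(\dot H^s)^4$ into $\dot H^{s+\varepsilon}$ and satisfies $$\|B_4(u,v,w,\varphi)\|_{\dot H^{s+\varepsilon}}\le c_4(s,\varepsilon)\|u\|_{\dot H^s}\|v\|_{\dot H^s}\|w\|_{\dot H^s}\|\varphi\|_{\dot H^s},$$ with a constant $c_4(s,\varepsilon)$ depending only on $s,\varepsilon$.
   Context: Write $\mathbb{Z}_0=\mathbb{Z}\setminus\{0\}$. For $s\in\mathbb{R}$, $\dot H^s$ denotes the Hilbert space of complex sequences $v=(v_k)_{k\in\mathbb{Z}_0}$ with $\|v\|_{\dot H^s}^2=\sum_{k\in\mathbb{Z}_0}|k|^{2s}|v_k|^2<\infty$. Let $\Phi(k_1,k_2,k_3,k_4)=(k_1+k_2+k_3+k_4)^3-k_1^3-k_2^3-k_3^3-k_4^3$. For $t\in\mathbb{R}$ define $B_4=\tfrac12B_4^1+B_4^2$, where for $k\in\mathbb{Z}_0$ $$B_4^1(u,v,w,\varphi)_k=\sum^{\mathrm{nonres}}\frac{e^{i\Phi(k_1,k_2,k_3,k_4)t}}{(k_1+k_2)(k_1+k_3+k_4)(k_2+k_3+k_4)}u_{k_1}v_{k_2}w_{k_3}\varphi_{k_4},$$ $$B_4^2(u,v,w,\varphi)_k=\sum^{\mathrm{nonres}}\frac{e^{i\Phi(k_1,k_2,k_3,k_4)t}(k_3+k_4)}{k_1(k_1+k_2)(k_1+k_3+k_4)(k_2+k_3+k_4)}u_{k_1}v_{k_2}w_{k_3}\varphi_{k_4},$$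 the sums running over $k_1,k_2,k_3,k_4\in\mathbb{Z}_0$ with $k_1+k_2+k_3+k_4=k$ and $(k_1+k_2)(k_1+k_3+k_4)(k_2+k_3+k_4)\ne0$. *)

theory Defs
  imports "HOL-Analysis.Analysis"
begin

text \<open>Sequences indexed by nonzero integers are modelled as functions int => complex;
  the value at index 0 is ignored everywhere.\<close>

definition Z0 :: "int set" where "Z0 = - {0}"

definition Hs_sq :: "real \<Rightarrow> (int \<Rightarrow> complex) \<Rightarrow> real" where
  "Hs_sq s v = (\<Sum>\<^sub>\<infinity>k\<in>Z0. \<bar>real_of_int k\<bar> powr (2 * s) * (cmod (v k))^2)"

definition in_Hs :: "real \<Rightarrow> (int \<Rightarrow> complex) \<Rightarrow> bool" where
  "in_Hs s v \<longleftrightarrow> (\<lambda>k. \<bar>real_of_int k\<bar> powr (2 * s) * (cmod (v k))^2) summable_on Z0"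

definition Hs_norm :: "real \<Rightarrow> (int \<Rightarrow> complex) \<Rightarrow> real" where
  "Hs_norm s v = sqrt (Hs_sq s v)"

definition Phi :: "int \<Rightarrow> int \<Rightarrow> int \<Rightarrow> int \<Rightarrow> int" where
  "Phi k1 k2 k3 k4 = (k1 + k2 + k3 + k4)^3 - k1^3 - k2^3 - k3^3 - k4^3"

definition nonres :: "int \<Rightarrow> (int \<times> int \<times> int \<times> int) set" where
  "nonres k = {(k1, k2, k3, k4). k1 \<noteq> 0 \<and> k2 \<noteq> 0 \<and> k3 \<noteq> 0 \<and> k4 \<noteq> 0 \<and>
      k1 + k2 + k3 + k4 = k \<and> (k1 + k2) * (k1 + k3 + k4) * (k2 + k3 + k4) \<noteq> 0}"

definition B41_term :: "real \<Rightarrow> (int \<Rightarrow> complex) \<Rightarrow> (int \<Rightarrow> complex) \<Rightarrow> (int \<Rightarrow> complex)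
    \<Rightarrow> (int \<Rightarrow> complex) \<Rightarrow> int \<times> int \<times> int \<times> int \<Rightarrow> complex" where
  "B41_term t u v w \<phi> = (\<lambda>(k1, k2, k3, k4).
     exp (\<i> * of_real (real_of_int (Phi k1 k2 k3 k4) * t))
     / of_int ((k1 + k2) * (k1 + k3 + k4) * (k2 + k3 + k4))
     * u k1 * v k2 * w k3 * \<phi> k4)"

definition B42_term :: "real \<Rightarrow> (int \<Rightarrow> complex) \<Rightarrow> (int \<Rightarrow> complex) \<Rightarrow> (int \<Rightarrow> complex)
    \<Rightarrow> (int \<Rightarrow> complex) \<Rightarrow> int \<times> int \<times> int \<times> int \<Rightarrow> complex" where
  "B42_term t u v w \<phi> = (\<lambda>(k1, k2, k3, k4).
     exp (\<i> * of_real (real_of_int (Phi k1 k2 k3 k4) * t)) * of_int (k3 + k4)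
     / of_int (k1 * (k1 + k2) * (k1 + k3 + k4) * (k2 + k3 + k4))
     * u k1 * v k2 * w k3 * \<phi> k4)"

definition B41 :: "real \<Rightarrow> (int \<Rightarrow> complex) \<Rightarrow> (int \<Rightarrow> complex) \<Rightarrow> (int \<Rightarrow> complex)
    \<Rightarrow> (int \<Rightarrow> complex) \<Rightarrow> int \<Rightarrow> complex" where
  "B41 t u v w \<phi> k = (\<Sum>\<^sub>\<infinity>q\<in>nonres k. B41_term t u v w \<phi> q)"

definition B42 :: "real \<Rightarrow> (int \<Rightarrow> complex) \<Rightarrow> (int \<Rightarrow> complex) \<Rightarrow> (int \<Rightarrow> complex)
    \<Rightarrow> (int \<Rightarrow> complex) \<Rightarrow> int \<Rightarrow> complex" where
  "B42 t u v w \<phi> k = (\<Sum>\<^sub>\<infinity>q\<in>nonres k. B42_term t u v w \<phi> q)"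

definition B4 :: "real \<Rightarrow> (int \<Rightarrow> complex) \<Rightarrow> (int \<Rightarrow> complex) \<Rightarrow> (int \<Rightarrow> complex)
    \<Rightarrow> (int \<Rightarrow> complex) \<Rightarrow> int \<Rightarrow> complex" where
  "B4 t u v w \<phi> k = B41 t u v w \<phi> k / 2 + B42 t u v w \<phi> k"

end

theory Submission
  imports Defs
begin


lemma nonneg_fin_bound:
  fixes f :: "'a \<Rightarrow> real"
  assumes nn: "\<And>x. x\<in>A \<Longrightarrow> 0 \<le> f x"
    and fb: "\<And>F. finite F \<Longrightarrow> F \<subseteq> A \<Longrightarrow> sum f F \<le> B"
  shows "f summable_on A" "infsum f A \<le> B"
proof -
  show s: "f summable_on A"
    by (rule nonneg_bdd_above_summable_on[OF nn]) (auto intro!: bdd_aboveI fb)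
  show "infsum f A \<le> B" by (rule infsum_le_finite_sums[OF s fb])
qed

lemma sum_le_prod3:
  fixes f :: "'q \<Rightarrow> real" and h :: "'q \<Rightarrow> 'a \<times> 'b \<times> 'c"
  assumes G: "finite G" "inj_on h G"
   and fb: "\<And>q. q\<in>G \<Longrightarrow> f q \<le> ba (fst (h q)) * bb (fst (snd (h q))) * bc (snd (snd (h q)))"
   and nn1: "\<And>x. 0 \<le> ba x" and nn2: "\<And>x. 0 \<le> bb x" and nn3: "\<And>x. 0 \<le> bc x"
   and S: "\<And>q. q\<in>G \<Longrightarrow> fst (h q) \<in> Sa \<and> fst (snd (h q)) \<in> Sb \<and> snd (snd (h q)) \<in> Sc"
   and B1: "\<And>F. finite F \<Longrightarrow> F \<subseteq> Sa \<Longrightarrow> sum ba F \<le> Ca"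
   and B2: "\<And>F. finite F \<Longrightarrow> F \<subseteq> Sb \<Longrightarrow> sum bb F \<le> Cb"
   and B3: "\<And>F. finite F \<Longrightarrow> F \<subseteq> Sc \<Longrightarrow> sum bc F \<le> Cc"
  shows "sum f G \<le> Ca*Cb*Cc"
proof -
  define P1 where "P1 = (\<lambda>q. fst (h q)) ` G"
  define P2 where "P2 = (\<lambda>q. fst (snd (h q))) ` G"
  define P3 where "P3 = (\<lambda>q. snd (snd (h q))) ` G"
  define g where "g = (\<lambda>(x,y,z). ba x * bb y * bc z)"
  have fin: "finite P1" "finite P2" "finite P3" using G by (auto simp: P1_def P2_def P3_def)
  have "sum f G \<le> sum (g \<circ> h) G"
  proof (rule sum_mono)
    fix q assume q: "q \<in> G"
    obtain a b c where hq: "h q = (a,b,c)" by (cases "h q") auto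
    show "f q \<le> (g \<circ> h) q" using fb[OF q] hq by (simp add: g_def)
  qed
  also have "\<dots> = sum g (h ` G)" using G by (simp add: sum.reindex)
  also have "\<dots> \<le> sum g (P1 \<times> P2 \<times> P3)"
  proof (rule sum_mono2)
    show "finite (P1 \<times> P2 \<times> P3)" using fin by simp
    show "h ` G \<subseteq> P1 \<times> P2 \<times> P3"
    proof
      fix x assume "x \<in> h ` G"
      then obtain q where q: "q \<in> G" "x = h q" by auto
      have a: "fst x \<in> P1" unfolding P1_def using q by (intro image_eqI[where x=q]) simp_all
      have b: "fst (snd x) \<in> P2" unfolding P2_def using q by (intro image_eqI[where x=q]) simp_all
      have c: "snd (snd x) \<in> P3" unfolding P3_def using q by (intro image_eqI[where x=q]) simp_all
      show "x \<in> P1 \<times> P2 \<times> P3" using a b c by (metis mem_Sigma_iff prod.collapse)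
    qed
    show "\<And>b. b \<in> P1 \<times> P2 \<times> P3 - h ` G \<Longrightarrow> 0 \<le> g b"
      by (auto simp: g_def nn1 nn2 nn3)
  qed
  also have "\<dots> = sum ba P1 * sum bb P2 * sum bc P3"
  proof -
    have "sum g (P1 \<times> P2 \<times> P3) = (\<Sum>x\<in>P1. \<Sum>y\<in>P2. \<Sum>z\<in>P3. ba x * bb y * bc z)"
      by (simp add: g_def sum.cartesian_product)
    also have "\<dots> = sum ba P1 * sum bb P2 * sum bc P3"
      by (simp add: sum_distrib_left[symmetric] sum_distrib_right[symmetric] mult.assoc)
    finally show ?thesis .
  qed
  also have "\<dots> \<le> Ca*Cb*Cc"
  proof -
    have s1: "sum ba P1 \<le> Ca" using fin S by (intro B1) (auto simp: P1_def)
    have s2: "sum bb P2 \<le> Cb" using fin S by (intro B2) (auto simp: P2_def)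
    have s3: "sum bc P3 \<le> Cc" using fin S by (intro B3) (auto simp: P3_def)
    have z: "0 \<le> sum ba P1" "0 \<le> sum bb P2" "0 \<le> sum bc P3" by (auto intro: sum_nonneg nn1 nn2 nn3)
    have m: "sum ba P1 * sum bb P2 \<le> Ca * Cb"
      by (rule mult_mono[OF s1 s2]) (use z s1 in linarith)+
    show ?thesis
      by (rule mult_mono[OF m s3]) (use z s1 s2 in \<open>simp_all add: mult_nonneg_nonneg\<close>)
  qed
  finally show ?thesis .
qed

lemma sum_le_prod4:
  fixes f :: "'q \<Rightarrow> real" and h :: "'q \<Rightarrow> 'a \<times> 'b \<times> 'c \<times> 'd"
  assumes G: "finite G" "inj_on h G"
   and fb: "\<And>q. q\<in>G \<Longrightarrow> f q \<le> ba (fst (h q)) * bb (fst (snd (h q))) * bc (fst (snd (snd (h q)))) * bd (snd (snd (snd (h q))))"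
   and nn1: "\<And>x. 0 \<le> ba x" and nn2: "\<And>x. 0 \<le> bb x" and nn3: "\<And>x. 0 \<le> bc x" and nn4: "\<And>x. 0 \<le> bd x"
   and S: "\<And>q. q\<in>G \<Longrightarrow> fst (h q) \<in> Sa \<and> fst (snd (h q)) \<in> Sb \<and> fst (snd (snd (h q))) \<in> Sc \<and> snd (snd (snd (h q))) \<in> Sd"
   and B1: "\<And>F. finite F \<Longrightarrow> F \<subseteq> Sa \<Longrightarrow> sum ba F \<le> Ca"
   and B2: "\<And>F. finite F \<Longrightarrow> F \<subseteq> Sb \<Longrightarrow> sum bb F \<le> Cb"
   and B3: "\<And>F. finite F \<Longrightarrow> F \<subseteq> Sc \<Longrightarrow> sum bc F \<le> Cc"
   and B4: "\<And>F. finite F \<Longrightarrow> F \<subseteq> Sd \<Longrightarrow> sum bd F \<le> Cd"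
  shows "sum f G \<le> Ca*Cb*Cc*Cd"
proof -
  define P1 where "P1 = (\<lambda>q. fst (h q)) ` G"
  define P2 where "P2 = (\<lambda>q. fst (snd (h q))) ` G"
  define P3 where "P3 = (\<lambda>q. fst (snd (snd (h q)))) ` G"
  define P4 where "P4 = (\<lambda>q. snd (snd (snd (h q)))) ` G"
  define g where "g = (\<lambda>(x,y,z,w). ba x * bb y * bc z * bd w)"
  have fin: "finite P1" "finite P2" "finite P3" "finite P4" using G by (auto simp: P1_def P2_def P3_def P4_def)
  have "sum f G \<le> sum (g \<circ> h) G"
  proof (rule sum_mono)
    fix q assume q: "q \<in> G"
    obtain a b c d where hq: "h q = (a,b,c,d)" by (cases "h q") auto
    show "f q \<le> (g \<circ> h) q" using fb[OF q] hq by (simp add: g_def)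
  qed
  also have "\<dots> = sum g (h ` G)" using G by (simp add: sum.reindex)
  also have "\<dots> \<le> sum g (P1 \<times> P2 \<times> P3 \<times> P4)"
  proof (rule sum_mono2)
    show "finite (P1 \<times> P2 \<times> P3 \<times> P4)" using fin by simp
    show "h ` G \<subseteq> P1 \<times> P2 \<times> P3 \<times> P4"
    proof
      fix x assume "x \<in> h ` G"
      then obtain q where q: "q \<in> G" "x = h q" by auto
      have a: "fst x \<in> P1" unfolding P1_def using q by (intro image_eqI[where x=q]) simp_all
      have b: "fst (snd x) \<in> P2" unfolding P2_def using q by (intro image_eqI[where x=q]) simp_all
      have c: "fst (snd (snd x)) \<in> P3" unfolding P3_def using q by (intro image_eqI[where x=q]) simp_all
      have d: "snd (snd (snd x)) \<in> P4" unfolding P4_def using q by (intro image_eqI[where x=q]) simp_all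
      show "x \<in> P1 \<times> P2 \<times> P3 \<times> P4" using a b c d by (metis mem_Sigma_iff prod.collapse)
    qed
    show "\<And>b. b \<in> P1 \<times> P2 \<times> P3 \<times> P4 - h ` G \<Longrightarrow> 0 \<le> g b"
      by (auto simp: g_def nn1 nn2 nn3 nn4)
  qed
  also have "\<dots> = sum ba P1 * sum bb P2 * sum bc P3 * sum bd P4"
  proof -
    have "sum g (P1 \<times> P2 \<times> P3 \<times> P4) = (\<Sum>x\<in>P1. \<Sum>y\<in>P2. \<Sum>z\<in>P3. \<Sum>w\<in>P4. ba x * bb y * bc z * bd w)"
      by (simp add: g_def sum.cartesian_product)
    also have "\<dots> = sum ba P1 * sum bb P2 * sum bc P3 * sum bd P4"
      by (simp add: sum_distrib_left[symmetric] sum_distrib_right[symmetric] mult.assoc)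
    finally show ?thesis .
  qed
  also have "\<dots> \<le> Ca*Cb*Cc*Cd"
  proof -
    have s1: "sum ba P1 \<le> Ca" using fin S by (intro B1) (auto simp: P1_def)
    have s2: "sum bb P2 \<le> Cb" using fin S by (intro B2) (auto simp: P2_def)
    have s3: "sum bc P3 \<le> Cc" using fin S by (intro B3) (auto simp: P3_def)
    have s4: "sum bd P4 \<le> Cd" using fin S by (intro B4) (auto simp: P4_def)
    have z: "0 \<le> sum ba P1" "0 \<le> sum bb P2" "0 \<le> sum bc P3" "0 \<le> sum bd P4" by (auto intro: sum_nonneg nn1 nn2 nn3 nn4)
    have m: "sum ba P1 * sum bb P2 \<le> Ca * Cb"
      by (rule mult_mono[OF s1 s2]) (use z s1 in linarith)+
    have m2: "sum ba P1 * sum bb P2 * sum bc P3 \<le> Ca * Cb * Cc"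
      by (rule mult_mono[OF m s3]) (use z s1 s2 in \<open>simp_all add: mult_nonneg_nonneg\<close>)
    show ?thesis
      by (rule mult_mono[OF m2 s4]) (use z s1 s2 s3 in \<open>simp_all add: mult_nonneg_nonneg\<close>)
  qed
  finally show ?thesis .
qed



lemma H_bound:
  fixes e :: real
  assumes "0 < e" "e < 1/2"
  shows "\<exists>H. \<forall>F. finite F \<longrightarrow> F \<subseteq> Z0 \<longrightarrow>
     (\<Sum>n\<in>F. \<bar>real_of_int n\<bar> powr (2*e) / (real_of_int n)^2) \<le> H"
proof -
  define g where "g = (\<lambda>m::nat. real m powr (2*e - 2))"
  have sg: "summable g" unfolding g_def using assms by (subst summable_real_powr_iff) simp
  have g0: "g 0 = 0" by (simp add: g_def)
  have gnn: "\<And>m. 0 \<le> g m" by (simp add: g_def)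
  have hn: "\<bar>real_of_int n\<bar> powr (2*e) / (real_of_int n)^2 = g (nat n) + g (nat (-n))" if "n \<noteq> 0" for n
  proof -
    have "\<bar>real_of_int n\<bar> powr (2*e) / (real_of_int n)^2 = \<bar>real_of_int n\<bar> powr (2*e - 2)"
      using that by (simp add: powr_diff powr_realpow)
    moreover have "g (nat n) + g (nat (-n)) = \<bar>real_of_int n\<bar> powr (2*e - 2)"
      using that by (cases "n > 0") (auto simp: g_def g0)
    ultimately show ?thesis by simp
  qed
  have key: "(\<Sum>n\<in>F. g (nat (f n))) \<le> suminf g" if "finite F" "inj_on f F" for F and f :: "int \<Rightarrow> int"
  proof -
    have "(\<Sum>n\<in>F. g (nat (f n))) = sum g ((\<lambda>n. nat (f n)) ` F)"
    proof (rule sum.reindex_nontrivial[symmetric, unfolded comp_def])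
      show "finite F" by fact
      fix x y assume "x \<in> F" "y \<in> F" "x \<noteq> y" "nat (f x) = nat (f y)"
      then have "f x \<noteq> f y" using \<open>inj_on f F\<close> by (auto dest: inj_onD)
      with \<open>nat (f x) = nat (f y)\<close> have "nat (f x) = 0" by linarith
      then show "g (nat (f x)) = 0" by (simp add: g0)
    qed
    also have "\<dots> \<le> suminf g" using that sg gnn by (intro sum_le_suminf) auto
    finally show ?thesis .
  qed
  show ?thesis
  proof (intro exI allI impI)
    fix F assume F: "finite F" "F \<subseteq> Z0"
    have "(\<Sum>n\<in>F. \<bar>real_of_int n\<bar> powr (2*e) / (real_of_int n)^2) = (\<Sum>n\<in>F. g (nat n)) + (\<Sum>n\<in>F. g (nat (-n)))"
      using F by (simp add: sum.distrib[symmetric] Z0_def subset_iff hn)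
    also have "\<dots> \<le> suminf g + suminf g"
      using key[of F "\<lambda>n. n"] key[of F "\<lambda>n. -n"] F by (intro add_mono) (auto simp: inj_on_def)
    finally show "(\<Sum>n\<in>F. \<bar>real_of_int n\<bar> powr (2*e) / (real_of_int n)^2) \<le> 2 * suminf g" by simp
  qed
qed



lemma frac_bound:
  fixes a al be ga :: real
  assumes "a \<noteq> 0" "al \<noteq> 0" "be \<noteq> 0" "ga \<noteq> 0"
  shows "\<bar>be - a\<bar> / \<bar>a*al*be*ga\<bar> \<le> 1/\<bar>al*be*ga\<bar> + 1/\<bar>a*al*ga\<bar>"
proof -
  have "\<bar>be - a\<bar> / \<bar>a*al*be*ga\<bar> \<le> (\<bar>be\<bar> + \<bar>a\<bar>) / \<bar>a*al*be*ga\<bar>"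
    by (intro divide_right_mono) auto
  also have "\<dots> = 1/\<bar>al*be*ga\<bar> + 1/\<bar>a*al*ga\<bar>"
    using assms by (simp add: abs_mult field_simps)
  finally show ?thesis .
qed

definition Aq :: "int \<times> int \<times> int \<times> int \<Rightarrow> real" where
  "Aq = (\<lambda>(k1,k2,k3,k4). 1 / \<bar>real_of_int ((k1+k2)*(k1+k3+k4)*(k2+k3+k4))\<bar>)"
definition Bq :: "int \<times> int \<times> int \<times> int \<Rightarrow> real" where
  "Bq = (\<lambda>(k1,k2,k3,k4). 1 / \<bar>real_of_int (k1*(k1+k2)*(k2+k3+k4))\<bar>)"
definition Pq :: "(int \<Rightarrow> complex) \<Rightarrow> (int \<Rightarrow> complex) \<Rightarrow> (int \<Rightarrow> complex) \<Rightarrow> (int \<Rightarrow> complex)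
   \<Rightarrow> int \<times> int \<times> int \<times> int \<Rightarrow> real" where
  "Pq u v w \<phi> = (\<lambda>(k1,k2,k3,k4). cmod (u k1) * cmod (v k2) * cmod (w k3) * cmod (\<phi> k4))"
definition Rq where "Rq u v w \<phi> q = 2 * (Aq q + Bq q) * Pq u v w \<phi> q"

lemma Pq_nn: "0 \<le> Pq u v w \<phi> q" by (auto simp: Pq_def split: prod.splits)
lemma Aq_nn: "0 \<le> Aq q" by (auto simp: Aq_def split: prod.splits)
lemma Bq_nn: "0 \<le> Bq q" by (auto simp: Bq_def split: prod.splits)

lemma B41_norm: "cmod (B41_term t u v w \<phi> q) = Aq q * Pq u v w \<phi> q"
  by (cases q) (simp add: B41_term_def Aq_def Pq_def norm_mult norm_divide norm_of_int del: of_int_add of_int_mult)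

lemma B42_norm:
  assumes "q \<in> nonres k"
  shows "cmod (B42_term t u v w \<phi> q) \<le> (Aq q + Bq q) * Pq u v w \<phi> q"
proof -
  obtain k1 k2 k3 k4 where q: "q = (k1,k2,k3,k4)" by (cases q) auto
  have nz: "k1 \<noteq> 0" "k1+k2 \<noteq> 0" "k1+k3+k4 \<noteq> 0" "k2+k3+k4 \<noteq> 0" using assms by (auto simp: q nonres_def)
  have "cmod (B42_term t u v w \<phi> q) = \<bar>real_of_int (k3+k4)\<bar> / \<bar>real_of_int (k1 * (k1 + k2) * (k1 + k3 + k4) * (k2 + k3 + k4))\<bar> * Pq u v w \<phi> q"
    by (simp add: q B42_term_def Pq_def norm_mult norm_divide norm_of_int del: of_int_add of_int_mult)
  also have "\<dots> \<le> (Aq q + Bq q) * Pq u v w \<phi> q"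
  proof (rule mult_right_mono[OF _ Pq_nn])
    have "\<bar>real_of_int (k1+k3+k4) - real_of_int k1\<bar> / \<bar>real_of_int k1 * real_of_int (k1+k2) * real_of_int (k1+k3+k4) * real_of_int (k2+k3+k4)\<bar>
       \<le> 1/\<bar>real_of_int (k1+k2) * real_of_int (k1+k3+k4) * real_of_int (k2+k3+k4)\<bar> + 1/\<bar>real_of_int k1 * real_of_int (k1+k2) * real_of_int (k2+k3+k4)\<bar>"
      by (rule frac_bound) (use nz in simp_all)
    then show "\<bar>real_of_int (k3+k4)\<bar> / \<bar>real_of_int (k1 * (k1 + k2) * (k1 + k3 + k4) * (k2 + k3 + k4))\<bar> \<le> Aq q + Bq q"
      by (simp add: q Aq_def Bq_def algebra_simps)
  qed
  finally show ?thesis .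
qed

lemma term_bounds:
  assumes "q \<in> nonres k"
  shows "cmod (B41_term t u v w \<phi> q) \<le> Rq u v w \<phi> q"
    and "cmod (B42_term t u v w \<phi> q) \<le> Rq u v w \<phi> q"
    and "cmod (B41_term t u v w \<phi> q) / 2 + cmod (B42_term t u v w \<phi> q) \<le> Rq u v w \<phi> q"
proof -
  have b: "cmod (B42_term t u v w \<phi> q) \<le> Aq q * Pq u v w \<phi> q + Bq q * Pq u v w \<phi> q"
    using B42_norm[OF assms, of t u v w \<phi>] by (simp add: algebra_simps)
  have ab: "0 \<le> Aq q * Pq u v w \<phi> q" "0 \<le> Bq q * Pq u v w \<phi> q"
    using Aq_nn[of q] Bq_nn[of q] Pq_nn[of u v w \<phi> q] by simp_all
  have r: "Rq u v w \<phi> q = 2 * (Aq q * Pq u v w \<phi> q) + 2 * (Bq q * Pq u v w \<phi> q)"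
    by (simp add: Rq_def algebra_simps)
  show "cmod (B41_term t u v w \<phi> q) \<le> Rq u v w \<phi> q"
    using ab r by (simp add: B41_norm)
  show "cmod (B42_term t u v w \<phi> q) \<le> Rq u v w \<phi> q"
    using ab r b by linarith
  show "cmod (B41_term t u v w \<phi> q) / 2 + cmod (B42_term t u v w \<phi> q) \<le> Rq u v w \<phi> q"
    using ab r b by (simp add: B41_norm)
qed


definition aa :: "real \<Rightarrow> (int \<Rightarrow> complex) \<Rightarrow> int \<Rightarrow> real" where
  "aa s u n = \<bar>real_of_int n\<bar> powr s * cmod (u n)"
definition xq where
  "xq s e w q = (case q of (k1,k2,k3,k4) \<Rightarrow> \<bar>real_of_int (k1+k2+k3+k4)\<bar> powr e * (2*(Aq q + Bq q)) * aa s w k3)"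
definition yq where
  "yq s u v \<phi> q = (case q of (k1,k2,k3,k4) \<Rightarrow> aa s u k1 * aa s v k2 * aa s \<phi> k4)"

lemma aa_nn: "0 \<le> aa s u n" by (simp add: aa_def)

lemma one_le_mul: "(1::real) \<le> x \<Longrightarrow> 1 \<le> y \<Longrightarrow> 1 \<le> x*y"
  using mult_mono[of 1 x 1 y] by simp
lemma le_mul: "(1::real) \<le> m \<Longrightarrow> 0 \<le> a \<Longrightarrow> a \<le> a*m"
  using mult_left_mono[of 1 m a] by simp
lemma abs_int_ge1: "k \<noteq> (0::int) \<Longrightarrow> 1 \<le> \<bar>real_of_int k\<bar>"
proof -
  assume "k \<noteq> 0" then have "1 \<le> \<bar>k\<bar>" by simp
  then show ?thesis by (metis of_int_1_le_iff of_int_abs)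
qed

lemma int_sum_le_prod:
  fixes k1 k2 k3 k4 :: int
  assumes "k1 \<noteq> 0" "k2 \<noteq> 0" "k3 \<noteq> 0" "k4 \<noteq> 0"
  shows "\<bar>real_of_int (k1+k2+k3+k4)\<bar> \<le> 4 * \<bar>real_of_int k1\<bar> * \<bar>real_of_int k2\<bar> * \<bar>real_of_int k3\<bar> * \<bar>real_of_int k4\<bar>"
proof -
  define a1 where "a1 = \<bar>real_of_int k1\<bar>"
  define a2 where "a2 = \<bar>real_of_int k2\<bar>"
  define a3 where "a3 = \<bar>real_of_int k3\<bar>"
  define a4 where "a4 = \<bar>real_of_int k4\<bar>"
  have g: "1 \<le> a1" "1 \<le> a2" "1 \<le> a3" "1 \<le> a4" using assms abs_int_ge1 by (auto simp: a1_def a2_def a3_def a4_def)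
  have t: "\<bar>real_of_int (k1+k2+k3+k4)\<bar> \<le> a1 + a2 + a3 + a4" unfolding a1_def a2_def a3_def a4_def by simp
  have p1: "a1 \<le> a1*a2*a3*a4" using le_mul[of "a2*a3*a4" a1] g one_le_mul by (simp add: mult.assoc)
  have p2: "a2 \<le> a1*a2*a3*a4" using le_mul[of "a1*a3*a4" a2] g one_le_mul by (simp add: ac_simps)
  have p3: "a3 \<le> a1*a2*a3*a4" using le_mul[of "a1*a2*a4" a3] g one_le_mul by (simp add: ac_simps)
  have p4: "a4 \<le> a1*a2*a3*a4" using le_mul[of "a1*a2*a3" a4] g one_le_mul by (simp add: ac_simps)
  show ?thesis using t p1 p2 p3 p4 unfolding a1_def[symmetric] a2_def[symmetric] a3_def[symmetric] a4_def[symmetric]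
    by (simp add: mult.assoc) 
qed

lemma T2:
  assumes "q \<in> nonres k" "0 \<le> s"
  shows "\<bar>real_of_int k\<bar> powr (s+e) * Rq u v w \<phi> q \<le> 4 powr s * (xq s e w q * yq s u v \<phi> q)"
proof -
  obtain k1 k2 k3 k4 where q: "q = (k1,k2,k3,k4)" by (cases q) auto
  have nz: "k1 \<noteq> 0" "k2 \<noteq> 0" "k3 \<noteq> 0" "k4 \<noteq> 0" and ks: "k = k1+k2+k3+k4"
    using assms by (auto simp: q nonres_def)
  have "\<bar>real_of_int k\<bar> powr s \<le> (4 * \<bar>real_of_int k1\<bar> * \<bar>real_of_int k2\<bar> * \<bar>real_of_int k3\<bar> * \<bar>real_of_int k4\<bar>) powr s"
    using int_sum_le_prod[OF nz] assms(2) by (intro powr_mono2) (auto simp: ks)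
  also have "\<dots> = 4 powr s * \<bar>real_of_int k1\<bar> powr s * \<bar>real_of_int k2\<bar> powr s * \<bar>real_of_int k3\<bar> powr s * \<bar>real_of_int k4\<bar> powr s"
    by (simp add: powr_mult)
  finally have kb: "\<bar>real_of_int k\<bar> powr s \<le> 4 powr s * \<bar>real_of_int k1\<bar> powr s * \<bar>real_of_int k2\<bar> powr s * \<bar>real_of_int k3\<bar> powr s * \<bar>real_of_int k4\<bar> powr s" .
  define Z where "Z = \<bar>real_of_int k\<bar> powr e * (2 * (Aq q + Bq q)) * Pq u v w \<phi> q"
  have Z: "0 \<le> Z" unfolding Z_def using Aq_nn[of q] Bq_nn[of q] Pq_nn[of u v w \<phi> q] by simp
  have "\<bar>real_of_int k\<bar> powr (s+e) * Rq u v w \<phi> q = \<bar>real_of_int k\<bar> powr s * Z"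
    by (simp add: Z_def Rq_def powr_add)
  also have "\<dots> \<le> (4 powr s * \<bar>real_of_int k1\<bar> powr s * \<bar>real_of_int k2\<bar> powr s * \<bar>real_of_int k3\<bar> powr s * \<bar>real_of_int k4\<bar> powr s) * Z"
    by (rule mult_right_mono[OF kb Z])
  also have "\<dots> = 4 powr s * (xq s e w q * yq s u v \<phi> q)"
    by (simp add: Z_def q xq_def yq_def aa_def Pq_def ks algebra_simps)
  finally show ?thesis .
qed



lemma aa_sq: "(aa s u n)^2 = \<bar>real_of_int n\<bar> powr (2 * s) * (cmod (u n))^2"
proof -
  have "\<bar>real_of_int n\<bar> powr (2 * s) = \<bar>real_of_int n\<bar> powr s * \<bar>real_of_int n\<bar> powr s"
    by (subst powr_add[symmetric]) simp
  then show ?thesis by (simp add: aa_def power2_eq_square)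
qed

lemma aa_sq_sum:
  assumes "in_Hs s u" "finite F" "F \<subseteq> Z0"
  shows "(\<Sum>n\<in>F. (aa s u n)^2) \<le> Hs_sq s u"
  unfolding Hs_sq_def aa_sq
  by (rule finite_sum_le_infsum) (use assms in \<open>auto simp: in_Hs_def\<close>)

lemma Hs_sq_nn: "0 \<le> Hs_sq s u"
  unfolding Hs_sq_def by (rule infsum_nonneg) simp

lemma T4:
  assumes "in_Hs s u" "in_Hs s v" "in_Hs s \<phi>" "finite G" "G \<subseteq> nonres k"
  shows "(\<Sum>q\<in>G. (yq s u v \<phi> q)^2) \<le> Hs_sq s u * Hs_sq s v * Hs_sq s \<phi>"
  apply (rule sum_le_prod3[where h="\<lambda>(k1,k2,k3,k4). (k1,k2,k4)" and ba="\<lambda>n. (aa s u n)^2"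
      and bb="\<lambda>n. (aa s v n)^2" and bc="\<lambda>n. (aa s \<phi> n)^2" and Sa=Z0 and Sb=Z0 and Sc=Z0])
  subgoal using assms(4) .
  subgoal
  proof (rule inj_onI)
    fix x y assume xy: "x \<in> G" "y \<in> G" "(case x of (k1, k2, k3, k4) \<Rightarrow> (k1, k2, k4)) = (case y of (k1, k2, k3, k4) \<Rightarrow> (k1, k2, k4))"
    obtain a1 a2 a3 a4 where x: "x = (a1,a2,a3,a4)" by (cases x) auto
    obtain b1 b2 b3 b4 where y: "y = (b1,b2,b3,b4)" by (cases y) auto
    have "a1+a2+a3+a4 = k" "b1+b2+b3+b4 = k" using xy(1,2) assms(5) by (auto simp: x y nonres_def)
    then show "x = y" using xy(3) by (simp add: x y)
  qed
  subgoal by (auto simp: yq_def power_mult_distrib split: prod.splits)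
  subgoal by simp
  subgoal by simp
  subgoal by simp
  subgoal using assms(5) by (auto simp: nonres_def Z0_def subset_iff split: prod.splits)
  subgoal using assms(1) by (rule aa_sq_sum)
  subgoal using assms(2) by (rule aa_sq_sum)
  subgoal using assms(3) by (rule aa_sq_sum)
  done



definition hh :: "real \<Rightarrow> int \<Rightarrow> real" where
  "hh e n = \<bar>real_of_int n\<bar> powr (2*e) / (real_of_int n)^2"

lemma hh_nn: "0 \<le> hh e n" by (simp add: hh_def)

lemma three_le: "(1::real) \<le> a \<Longrightarrow> 1 \<le> b \<Longrightarrow> 1 \<le> c \<Longrightarrow> a + b + c \<le> 3*(a*b*c)"
proof -
  assume g: "1 \<le> a" "1 \<le> b" "1 \<le> c"
  have p1: "a \<le> a*b*c" using le_mul[of "b*c" a] g one_le_mul by (simp add: mult.assoc)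
  have p2: "b \<le> a*b*c" using le_mul[of "a*c" b] g one_le_mul by (simp add: ac_simps)
  have p3: "c \<le> a*b*c" using le_mul[of "a*b" c] g one_le_mul by (simp add: ac_simps)
  show ?thesis using p1 p2 p3 by simp
qed

lemma kbound:
  fixes x y z K e :: real
  assumes "1 \<le> \<bar>x\<bar>" "1 \<le> \<bar>y\<bar>" "1 \<le> \<bar>z\<bar>" "\<bar>K\<bar> \<le> 2*(\<bar>x\<bar>*\<bar>y\<bar>*\<bar>z\<bar>)" "0 < e" "e < 1/2"
  shows "\<bar>K\<bar> powr (2*e) * (1/\<bar>x*y*z\<bar>)^2 \<le> 2 * (\<bar>x\<bar> powr (2*e)/x^2) * (\<bar>y\<bar> powr (2*e)/y^2) * (\<bar>z\<bar> powr (2*e)/z^2)"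
proof -
  have "\<bar>K\<bar> powr (2*e) \<le> (2*(\<bar>x\<bar>*\<bar>y\<bar>*\<bar>z\<bar>)) powr (2*e)"
    using assms by (intro powr_mono2) auto
  also have "\<dots> = 2 powr (2*e) * (\<bar>x\<bar> powr (2*e) * \<bar>y\<bar> powr (2*e) * \<bar>z\<bar> powr (2*e))"
    by (simp add: powr_mult)
  also have "\<dots> \<le> 2 * (\<bar>x\<bar> powr (2*e) * \<bar>y\<bar> powr (2*e) * \<bar>z\<bar> powr (2*e))"
  proof (rule mult_right_mono)
    have "(2::real) powr (2*e) \<le> 2 powr 1" using assms by (intro powr_mono) auto
    then show "(2::real) powr (2*e) \<le> 2" by simp
  qed simp
  finally have a: "\<bar>K\<bar> powr (2*e) \<le> 2 * (\<bar>x\<bar> powr (2*e) * \<bar>y\<bar> powr (2*e) * \<bar>z\<bar> powr (2*e))" .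
  have b: "0 \<le> (1/\<bar>x*y*z\<bar>)^2" by simp
  have "\<bar>K\<bar> powr (2*e) * (1/\<bar>x*y*z\<bar>)^2 \<le> 2 * (\<bar>x\<bar> powr (2*e) * \<bar>y\<bar> powr (2*e) * \<bar>z\<bar> powr (2*e)) * (1/\<bar>x*y*z\<bar>)^2"
    by (rule mult_right_mono[OF a b])
  also have "\<dots> = 2 * (\<bar>x\<bar> powr (2*e)/x^2) * (\<bar>y\<bar> powr (2*e)/y^2) * (\<bar>z\<bar> powr (2*e)/z^2)"
    by (simp add: power_mult_distrib power_divide abs_mult)
  finally show ?thesis .
qed

definition Qall :: "(int \<times> int \<times> int \<times> int) set" where
  "Qall = {(k1,k2,k3,k4). k1 \<noteq> 0 \<and> k2 \<noteq> 0 \<and> k3 \<noteq> 0 \<and> k4 \<noteq> 0 \<and> (k1+k2)*(k1+k3+k4)*(k2+k3+k4) \<noteq> 0}"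

lemma nonres_sub: "nonres k \<subseteq> Qall"
  by (auto simp: nonres_def Qall_def)

definition fA where
  "fA s e w q = (case q of (k1,k2,k3,k4) \<Rightarrow> \<bar>real_of_int (k1+k2+k3+k4)\<bar> powr (2*e) * (Aq q)^2 * (aa s w k3)^2)"
definition fB where
  "fB s e w q = (case q of (k1,k2,k3,k4) \<Rightarrow> \<bar>real_of_int (k1+k2+k3+k4)\<bar> powr (2*e) * (Bq q)^2 * (aa s w k3)^2)"

lemma xq_sq: "(xq s e w q)^2 \<le> 8 * fA s e w q + 8 * fB s e w q"
proof -
  obtain k1 k2 k3 k4 where q: "q = (k1,k2,k3,k4)" by (cases q) auto
  define K where "K = \<bar>real_of_int (k1+k2+k3+k4)\<bar>"
  define A where "A = Aq q"
  define B where "B = Bq q"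
  define a where "a = aa s w k3"
  have K2: "(K powr e)^2 = K powr (2*e)"
  proof -
    have "K powr (2*e) = K powr e * K powr e" by (subst powr_add[symmetric]) simp
    then show ?thesis by (simp add: power2_eq_square)
  qed
  have x: "(xq s e w q)^2 = 4 * (K powr (2*e) * a^2) * (A+B)^2"
  proof -
    have xe: "xq s e w q = K powr e * (2*(A+B)) * a" by (simp add: xq_def q K_def A_def B_def a_def)
    show ?thesis unfolding xe K2[symmetric] by (simp add: power_mult_distrib power2_eq_square algebra_simps)
  qed
  have ab: "(A+B)^2 \<le> 2*A^2 + 2*B^2"
  proof -
    have "0 \<le> (A-B)^2" by simp
    then show ?thesis by (simp add: power2_eq_square algebra_simps)
  qed
  have nn: "0 \<le> 4 * (K powr (2*e) * a^2)" by simp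
  have "(xq s e w q)^2 \<le> 4 * (K powr (2*e) * a^2) * (2*A^2 + 2*B^2)"
    unfolding x by (rule mult_left_mono[OF ab nn])
  also have "\<dots> = 8 * fA s e w q + 8 * fB s e w q"
  proof -
    have fa: "fA s e w q = K powr (2*e) * A^2 * a^2" by (simp add: fA_def q K_def A_def a_def)
    have fb: "fB s e w q = K powr (2*e) * B^2 * a^2" by (simp add: fB_def q K_def B_def a_def)
    show ?thesis unfolding fa fb by (simp add: algebra_simps)
  qed
  finally show ?thesis .
qed


lemma fA_pt:
  assumes "q \<in> Qall" "0 < e" "e < 1/2"
  shows "fA s e w q \<le> (case q of (k1,k2,k3,k4) \<Rightarrow> (2*(aa s w k3)^2) * hh e (k1+k2) * hh e (k1+k3+k4) * hh e (k2+k3+k4))"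
proof -
  obtain k1 k2 k3 k4 where q: "q = (k1,k2,k3,k4)" by (cases q) auto
  define x where "x = real_of_int (k1+k2)"
  define y where "y = real_of_int (k1+k3+k4)"
  define z where "z = real_of_int (k2+k3+k4)"
  define K where "K = real_of_int (k1+k2+k3+k4)"
  have nz: "k1+k2 \<noteq> 0" "k1+k3+k4 \<noteq> 0" "k2+k3+k4 \<noteq> 0" using assms(1) by (auto simp: q Qall_def)
  have g: "1 \<le> \<bar>x\<bar>" "1 \<le> \<bar>y\<bar>" "1 \<le> \<bar>z\<bar>" using nz abs_int_ge1 by (auto simp: x_def y_def z_def)
  have "2*K = x + y + z" by (simp add: K_def x_def y_def z_def)
  then have "\<bar>2*K\<bar> \<le> \<bar>x\<bar> + \<bar>y\<bar> + \<bar>z\<bar>" by simp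
  also have "\<dots> \<le> 3*(\<bar>x\<bar>*\<bar>y\<bar>*\<bar>z\<bar>)" using g by (rule three_le)
  finally have Kb: "\<bar>K\<bar> \<le> 2*(\<bar>x\<bar>*\<bar>y\<bar>*\<bar>z\<bar>)" using g
    by (smt (verit) mult_nonneg_nonneg abs_ge_zero)
  have kb: "\<bar>K\<bar> powr (2*e) * (1/\<bar>x*y*z\<bar>)^2 \<le> 2 * (\<bar>x\<bar> powr (2*e)/x^2) * (\<bar>y\<bar> powr (2*e)/y^2) * (\<bar>z\<bar> powr (2*e)/z^2)"
    by (rule kbound[OF g Kb assms(2,3)])
  have fa: "fA s e w q = (\<bar>K\<bar> powr (2*e) * (1/\<bar>x*y*z\<bar>)^2) * (aa s w k3)^2"
    by (simp add: fA_def q Aq_def K_def x_def y_def z_def del: of_int_add)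
  have "fA s e w q \<le> (2 * (\<bar>x\<bar> powr (2*e)/x^2) * (\<bar>y\<bar> powr (2*e)/y^2) * (\<bar>z\<bar> powr (2*e)/z^2)) * (aa s w k3)^2"
    unfolding fa by (rule mult_right_mono[OF kb]) simp
  also have "\<dots> = (case q of (k1,k2,k3,k4) \<Rightarrow> (2*(aa s w k3)^2) * hh e (k1+k2) * hh e (k1+k3+k4) * hh e (k2+k3+k4))"
    by (simp add: q hh_def x_def y_def z_def del: of_int_add)
  finally show ?thesis .
qed

lemma fB_pt:
  assumes "q \<in> Qall" "0 < e" "e < 1/2"
  shows "fB s e w q \<le> (case q of (k1,k2,k3,k4) \<Rightarrow> (2*(aa s w k3)^2) * hh e k1 * hh e (k1+k2) * hh e (k2+k3+k4))"
proof -
  obtain k1 k2 k3 k4 where q: "q = (k1,k2,k3,k4)" by (cases q) auto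
  define x where "x = real_of_int k1"
  define y where "y = real_of_int (k1+k2)"
  define z where "z = real_of_int (k2+k3+k4)"
  define K where "K = real_of_int (k1+k2+k3+k4)"
  have nz: "k1 \<noteq> 0" "k1+k2 \<noteq> 0" "k2+k3+k4 \<noteq> 0" using assms(1) by (auto simp: q Qall_def)
  have g: "1 \<le> \<bar>x\<bar>" "1 \<le> \<bar>y\<bar>" "1 \<le> \<bar>z\<bar>" using nz abs_int_ge1 by (auto simp: x_def y_def z_def)
  have "K = x + z" by (simp add: K_def x_def z_def)
  then have "\<bar>K\<bar> \<le> \<bar>x\<bar> + \<bar>y\<bar> + \<bar>z\<bar>" using g by simp
  also have "\<dots> \<le> 3*(\<bar>x\<bar>*\<bar>y\<bar>*\<bar>z\<bar>)" using g by (rule three_le)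
  finally have K3: "\<bar>K\<bar> \<le> 3*(\<bar>x\<bar>*\<bar>y\<bar>*\<bar>z\<bar>)" .
  have Kb: "\<bar>K\<bar> \<le> 2*(\<bar>x\<bar>*\<bar>y\<bar>*\<bar>z\<bar>)"
  proof -
    have "\<bar>x\<bar> + \<bar>z\<bar> \<le> 2*(\<bar>x\<bar>*\<bar>z\<bar>)"
    proof -
      have "\<bar>x\<bar> \<le> \<bar>x\<bar>*\<bar>z\<bar>" using le_mul[of "\<bar>z\<bar>" "\<bar>x\<bar>"] g by simp
      moreover have "\<bar>z\<bar> \<le> \<bar>x\<bar>*\<bar>z\<bar>" using le_mul[of "\<bar>x\<bar>" "\<bar>z\<bar>"] g by (simp add: ac_simps)
      ultimately show ?thesis by simp
    qed
    also have "\<dots> \<le> 2*(\<bar>x\<bar>*\<bar>y\<bar>*\<bar>z\<bar>)"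
      using le_mul[of "\<bar>y\<bar>" "\<bar>x\<bar>*\<bar>z\<bar>"] g by (simp add: ac_simps)
    finally show ?thesis using \<open>K = x + z\<close> by simp
  qed
  have kb: "\<bar>K\<bar> powr (2*e) * (1/\<bar>x*y*z\<bar>)^2 \<le> 2 * (\<bar>x\<bar> powr (2*e)/x^2) * (\<bar>y\<bar> powr (2*e)/y^2) * (\<bar>z\<bar> powr (2*e)/z^2)"
    by (rule kbound[OF g Kb assms(2,3)])
  have fb: "fB s e w q = (\<bar>K\<bar> powr (2*e) * (1/\<bar>x*y*z\<bar>)^2) * (aa s w k3)^2"
    by (simp add: fB_def q Bq_def K_def x_def y_def z_def del: of_int_add)
  have "fB s e w q \<le> (2 * (\<bar>x\<bar> powr (2*e)/x^2) * (\<bar>y\<bar> powr (2*e)/y^2) * (\<bar>z\<bar> powr (2*e)/z^2)) * (aa s w k3)^2"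
    unfolding fb by (rule mult_right_mono[OF kb]) simp
  also have "\<dots> = (case q of (k1,k2,k3,k4) \<Rightarrow> (2*(aa s w k3)^2) * hh e k1 * hh e (k1+k2) * hh e (k2+k3+k4))"
    by (simp add: q hh_def x_def y_def z_def del: of_int_add)
  finally show ?thesis .
qed


lemma fA_sum:
  assumes w: "in_Hs s w" and F: "finite F" "F \<subseteq> Qall" and e: "0 < e" "e < 1/2"
    and Hb: "\<And>F. finite F \<Longrightarrow> F \<subseteq> Z0 \<Longrightarrow> sum (hh e) F \<le> H"
  shows "sum (fA s e w) F \<le> (2*Hs_sq s w)*H*H*H"
  apply (rule sum_le_prod4[where h="\<lambda>(k1,k2,k3,k4). (k3, k1+k2, k1+k3+k4, k2+k3+k4)"
        and ba="\<lambda>n. 2*(aa s w n)^2" and bb="hh e" and bc="hh e" and bd="hh e"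
        and Sa=Z0 and Sb=Z0 and Sc=Z0 and Sd=Z0])
  subgoal using F(1) .
  subgoal
  proof (rule inj_onI)
    fix x y :: "int \<times> int \<times> int \<times> int" assume xy: "(case x of (k1, k2, k3, k4) \<Rightarrow> (k3, k1+k2, k1+k3+k4, k2+k3+k4)) = (case y of (k1, k2, k3, k4) \<Rightarrow> (k3, k1+k2, k1+k3+k4, k2+k3+k4))"
    obtain a1 a2 a3 a4 where x: "x = (a1,a2,a3,a4)" by (cases x) auto
    obtain b1 b2 b3 b4 where y: "y = (b1,b2,b3,b4)" by (cases y) auto
    have c: "a3 = b3 \<and> a1+a2 = b1+b2 \<and> a1+a3+a4 = b1+b3+b4 \<and> a2+a3+a4 = b2+b3+b4" using xy unfolding x y by auto
    from c have "a3 = b3" "a1+a2 = b1+b2" "a1+a3+a4 = b1+b3+b4" "a2+a3+a4 = b2+b3+b4" using c by blast+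
    then have "a1 = b1 \<and> a2 = b2 \<and> a3 = b3 \<and> a4 = b4" by presburger
    then show "x = y" by (simp add: x y)
  qed
  subgoal for q using fA_pt[of q e s w] F e by (auto split: prod.splits)
  subgoal by simp
  subgoal by (rule hh_nn)
  subgoal by (rule hh_nn)
  subgoal by (rule hh_nn)
  subgoal for q using F by (auto simp: Qall_def Z0_def subset_iff split: prod.splits)
  subgoal for G using aa_sq_sum[OF w, of G] by (simp add: sum_distrib_left[symmetric])
  subgoal for G by (rule Hb)
  subgoal for G by (rule Hb)
  subgoal for G by (rule Hb)
  done

lemma fB_sum:
  assumes w: "in_Hs s w" and F: "finite F" "F \<subseteq> Qall" and e: "0 < e" "e < 1/2"
    and Hb: "\<And>F. finite F \<Longrightarrow> F \<subseteq> Z0 \<Longrightarrow> sum (hh e) F \<le> H"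
  shows "sum (fB s e w) F \<le> (2*Hs_sq s w)*H*H*H"
  apply (rule sum_le_prod4[where h="\<lambda>(k1,k2,k3,k4). (k3, k1, k1+k2, k2+k3+k4)"
        and ba="\<lambda>n. 2*(aa s w n)^2" and bb="hh e" and bc="hh e" and bd="hh e"
        and Sa=Z0 and Sb=Z0 and Sc=Z0 and Sd=Z0])
  subgoal using F(1) .
  subgoal
  proof (rule inj_onI)
    fix x y :: "int \<times> int \<times> int \<times> int" assume xy: "(case x of (k1, k2, k3, k4) \<Rightarrow> (k3, k1, k1+k2, k2+k3+k4)) = (case y of (k1, k2, k3, k4) \<Rightarrow> (k3, k1, k1+k2, k2+k3+k4))"
    obtain a1 a2 a3 a4 where x: "x = (a1,a2,a3,a4)" by (cases x) auto
    obtain b1 b2 b3 b4 where y: "y = (b1,b2,b3,b4)" by (cases y) auto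
    have c: "a3 = b3 \<and> a1 = b1 \<and> a1+a2 = b1+b2 \<and> a2+a3+a4 = b2+b3+b4" using xy unfolding x y by auto
    from c have "a3 = b3" "a1 = b1" "a1+a2 = b1+b2" "a2+a3+a4 = b2+b3+b4" using c by blast+
    then have "a1 = b1 \<and> a2 = b2 \<and> a3 = b3 \<and> a4 = b4" by presburger
    then show "x = y" by (simp add: x y)
  qed
  subgoal for q using fB_pt[of q e s w] F e by (auto split: prod.splits)
  subgoal by simp
  subgoal by (rule hh_nn)
  subgoal by (rule hh_nn)
  subgoal by (rule hh_nn)
  subgoal for q using F by (auto simp: Qall_def Z0_def subset_iff split: prod.splits)
  subgoal for G using aa_sq_sum[OF w, of G] by (simp add: sum_distrib_left[symmetric])
  subgoal for G by (rule Hb)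
  subgoal for G by (rule Hb)
  subgoal for G by (rule Hb)
  done

lemma xq_sum:
  assumes w: "in_Hs s w" and F: "finite F" "F \<subseteq> Qall" and e: "0 < e" "e < 1/2"
    and Hb: "\<And>F. finite F \<Longrightarrow> F \<subseteq> Z0 \<Longrightarrow> sum (hh e) F \<le> H"
  shows "(\<Sum>q\<in>F. (xq s e w q)^2) \<le> 32 * Hs_sq s w * H^3"
proof -
  have "(\<Sum>q\<in>F. (xq s e w q)^2) \<le> (\<Sum>q\<in>F. 8 * fA s e w q + 8 * fB s e w q)"
    by (rule sum_mono) (rule xq_sq)
  also have "\<dots> = 8 * sum (fA s e w) F + 8 * sum (fB s e w) F"
    by (simp add: sum.distrib sum_distrib_left)
  also have "\<dots> \<le> 8 * ((2*Hs_sq s w)*H*H*H) + 8 * ((2*Hs_sq s w)*H*H*H)"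
    using fA_sum[OF assms] fB_sum[OF assms] by linarith
  also have "\<dots> = 32 * Hs_sq s w * H^3" by (simp add: power3_eq_cube)
  finally show ?thesis .
qed



lemma perk:
  assumes u: "in_Hs s u" and v: "in_Hs s v" and w: "in_Hs s w" and ph: "in_Hs s \<phi>"
    and k: "k \<in> Z0" and s: "0 \<le> s" and e: "0 < e" "e < 1/2"
    and Hb: "\<And>F. finite F \<Longrightarrow> F \<subseteq> Z0 \<Longrightarrow> sum (hh e) F \<le> H"
  shows "B41_term t u v w \<phi> summable_on nonres k" "B42_term t u v w \<phi> summable_on nonres k"
    and "(\<bar>real_of_int k\<bar> powr (s+e) * cmod (B4 t u v w \<phi> k))^2
         \<le> (3/2 * 4 powr s)^2 * (infsum (\<lambda>q. (xq s e w q)^2) (nonres k) * (Hs_sq s u * Hs_sq s v * Hs_sq s \<phi>))"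
proof -
  define X where "X = infsum (\<lambda>q. (xq s e w q)^2) (nonres k)"
  define Y where "Y = Hs_sq s u * Hs_sq s v * Hs_sq s \<phi>"
  define W where "W = \<bar>real_of_int k\<bar> powr (s+e)"
  define T where "T = 4 powr s * sqrt (X * Y) / W"
  have Wp: "0 < W" using k by (simp add: W_def Z0_def)
  have xs: "(\<lambda>q. (xq s e w q)^2) summable_on nonres k"
    by (rule nonneg_fin_bound(1)[where B="32 * Hs_sq s w * H^3"])
       (use nonres_sub in \<open>auto intro!: xq_sum[OF w _ _ e Hb]\<close>)
  have X0: "0 \<le> X" unfolding X_def by (rule infsum_nonneg) simp
  have Gb: "sum (Rq u v w \<phi>) G \<le> T" if G: "finite G" "G \<subseteq> nonres k" for G
  proof -
    have sx: "(\<Sum>q\<in>G. (xq s e w q)^2) \<le> X"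
      unfolding X_def by (rule finite_sum_le_infsum[OF xs G]) simp
    have sy: "(\<Sum>q\<in>G. (yq s u v \<phi> q)^2) \<le> Y"
      unfolding Y_def by (rule T4[OF u v ph G])
    have cs: "(\<Sum>q\<in>G. xq s e w q * yq s u v \<phi> q) \<le> sqrt (X * Y)"
    proof (rule real_le_rsqrt)
      have "(\<Sum>q\<in>G. xq s e w q * yq s u v \<phi> q)^2 \<le> (\<Sum>q\<in>G. (xq s e w q)^2) * (\<Sum>q\<in>G. (yq s u v \<phi> q)^2)"
        by (rule Cauchy_Schwarz_ineq_sum)
      also have "\<dots> \<le> X * Y"
        by (rule mult_mono[OF sx sy]) (use X0 in \<open>auto intro: sum_nonneg\<close>)
      finally show "(\<Sum>q\<in>G. xq s e w q * yq s u v \<phi> q)^2 \<le> X * Y" .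
    qed
    have "W * sum (Rq u v w \<phi>) G = (\<Sum>q\<in>G. W * Rq u v w \<phi> q)" by (simp add: sum_distrib_left)
    also have "\<dots> \<le> (\<Sum>q\<in>G. 4 powr s * (xq s e w q * yq s u v \<phi> q))"
      unfolding W_def by (rule sum_mono) (rule T2, use G s in auto)
    also have "\<dots> = 4 powr s * (\<Sum>q\<in>G. xq s e w q * yq s u v \<phi> q)" by (simp add: sum_distrib_left)
    also have "\<dots> \<le> 4 powr s * sqrt (X * Y)" by (rule mult_left_mono[OF cs]) simp
    finally have "W * sum (Rq u v w \<phi>) G \<le> 4 powr s * sqrt (X * Y)" .
    then show ?thesis unfolding T_def using Wp by (simp add: field_simps)
  qed
  have Rnn: "0 \<le> Rq u v w \<phi> q" for q
    using Aq_nn[of q] Bq_nn[of q] Pq_nn[of u v w \<phi> q] by (simp add: Rq_def)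
  have b41: "(\<lambda>q. cmod (B41_term t u v w \<phi> q)) summable_on nonres k"
     "infsum (\<lambda>q. cmod (B41_term t u v w \<phi> q)) (nonres k) \<le> T"
  proof -
    have "(\<Sum>q\<in>G. cmod (B41_term t u v w \<phi> q)) \<le> T" if "finite G" "G \<subseteq> nonres k" for G
      by (rule order_trans[OF sum_mono Gb]) (use that in \<open>auto intro: term_bounds(1)\<close>)
    then show "(\<lambda>q. cmod (B41_term t u v w \<phi> q)) summable_on nonres k"
     "infsum (\<lambda>q. cmod (B41_term t u v w \<phi> q)) (nonres k) \<le> T"
      using nonneg_fin_bound[of "nonres k" "\<lambda>q. cmod (B41_term t u v w \<phi> q)" T] by auto
  qed
  have b42: "(\<lambda>q. cmod (B42_term t u v w \<phi> q)) summable_on nonres k"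
     "infsum (\<lambda>q. cmod (B42_term t u v w \<phi> q)) (nonres k) \<le> T"
  proof -
    have "(\<Sum>q\<in>G. cmod (B42_term t u v w \<phi> q)) \<le> T" if "finite G" "G \<subseteq> nonres k" for G
      by (rule order_trans[OF sum_mono Gb]) (use that in \<open>auto intro: term_bounds(2)\<close>)
    then show "(\<lambda>q. cmod (B42_term t u v w \<phi> q)) summable_on nonres k"
     "infsum (\<lambda>q. cmod (B42_term t u v w \<phi> q)) (nonres k) \<le> T"
      using nonneg_fin_bound[of "nonres k" "\<lambda>q. cmod (B42_term t u v w \<phi> q)" T] by auto
  qed
  show s1: "B41_term t u v w \<phi> summable_on nonres k"
    using b41(1) summable_on_iff_abs_summable_on_complex by blast
  show s2: "B42_term t u v w \<phi> summable_on nonres k"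
    using b42(1) summable_on_iff_abs_summable_on_complex by blast
  have n41: "cmod (B41 t u v w \<phi> k) \<le> T"
    unfolding B41_def using norm_infsum_bound[of "B41_term t u v w \<phi>" "nonres k"] b41 s1
    summable_on_iff_abs_summable_on_complex by (meson order_trans)
  have n42: "cmod (B42 t u v w \<phi> k) \<le> T"
    unfolding B42_def using norm_infsum_bound[of "B42_term t u v w \<phi>" "nonres k"] b42 s2
    summable_on_iff_abs_summable_on_complex by (meson order_trans)
  have nB: "cmod (B4 t u v w \<phi> k) \<le> 3/2 * T"
  proof -
    have "cmod (B4 t u v w \<phi> k) \<le> cmod (B41 t u v w \<phi> k) / 2 + cmod (B42 t u v w \<phi> k)"
      unfolding B4_def by (metis norm_divide norm_numeral norm_triangle_ineq)
    then show ?thesis using n41 n42 by linarith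
  qed
  have "W * cmod (B4 t u v w \<phi> k) \<le> W * (3/2 * T)" by (rule mult_left_mono[OF nB]) (use Wp in simp)
  also have "\<dots> = 3/2 * 4 powr s * sqrt (X * Y)" unfolding T_def using Wp by simp
  finally have le: "W * cmod (B4 t u v w \<phi> k) \<le> 3/2 * 4 powr s * sqrt (X * Y)" .
  have XY: "0 \<le> X * Y"
    unfolding X_def Y_def by (intro mult_nonneg_nonneg infsum_nonneg Hs_sq_nn) simp_all
  have "(W * cmod (B4 t u v w \<phi> k))^2 \<le> (3/2 * 4 powr s * sqrt (X * Y))^2"
    by (rule power_mono[OF le]) (use Wp in simp)
  also have "\<dots> = (3/2 * 4 powr s)^2 * (X * Y)" using XY by (simp add: power_mult_distrib power_divide real_sqrt_pow2)
  finally show "(\<bar>real_of_int k\<bar> powr (s+e) * cmod (B4 t u v w \<phi> k))^2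
         \<le> (3/2 * 4 powr s)^2 * (infsum (\<lambda>q. (xq s e w q)^2) (nonres k) * (Hs_sq s u * Hs_sq s v * Hs_sq s \<phi>))"
    unfolding W_def X_def Y_def .
qed



lemma pw_sq: "((x::real) powr a * c)^2 = x powr (2*a) * c^2"
proof -
  have "x powr (2*a) = x powr a * x powr a" by (subst powr_add[symmetric]) simp
  then show ?thesis by (simp add: power2_eq_square)
qed

theorem lemma7p13:
  fixes s \<epsilon> :: real
  assumes "s \<ge> 0" and "0 < \<epsilon>" and "\<epsilon> < 1/2"
  shows "\<exists>c4. \<forall>t u v w \<phi>. in_Hs s u \<and> in_Hs s v \<and> in_Hs s w \<and> in_Hs s \<phi> \<longrightarrow>
           (\<forall>k\<in>Z0. B41_term t u v w \<phi> summable_on nonres k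
                  \<and> B42_term t u v w \<phi> summable_on nonres k)
         \<and> in_Hs (s + \<epsilon>) (B4 t u v w \<phi>)
         \<and> Hs_norm (s + \<epsilon>) (B4 t u v w \<phi>)
             \<le> c4 * Hs_norm s u * Hs_norm s v * Hs_norm s w * Hs_norm s \<phi>"
proof -
  obtain H0 where H0: "\<forall>F. finite F \<longrightarrow> F \<subseteq> Z0 \<longrightarrow> (\<Sum>n\<in>F. \<bar>real_of_int n\<bar> powr (2*\<epsilon>) / (real_of_int n)^2) \<le> H0"
    using H_bound[OF assms(2,3)] by blast
  have Hb: "\<And>F. finite F \<Longrightarrow> F \<subseteq> Z0 \<Longrightarrow> sum (hh \<epsilon>) F \<le> H0" using H0 by (simp add: hh_def)
  have H0nn: "0 \<le> H0" using Hb[of "{}"] by simp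
  define c where "c = 3/2 * 4 powr s"
  define c4 where "c4 = c * sqrt (32 * H0^3)"
  have cnn: "0 \<le> c" by (simp add: c_def)
  have c4nn: "0 \<le> c4" unfolding c4_def using cnn H0nn by (intro mult_nonneg_nonneg) auto
  show ?thesis
  proof (intro exI allI impI)
    fix t u v w \<phi> assume A: "in_Hs s u \<and> in_Hs s v \<and> in_Hs s w \<and> in_Hs s \<phi>"
    then have u: "in_Hs s u" and v: "in_Hs s v" and w: "in_Hs s w" and ph: "in_Hs s \<phi>" by auto
    define Y where "Y = Hs_sq s u * Hs_sq s v * Hs_sq s \<phi>"
    have Ynn: "0 \<le> Y" unfolding Y_def by (intro mult_nonneg_nonneg Hs_sq_nn)
    define D where "D = c^2 * Y * (32 * Hs_sq s w * H0^3)"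
    let ?x2 = "\<lambda>q. (xq s \<epsilon> w q)^2"
    let ?f = "\<lambda>k. \<bar>real_of_int k\<bar> powr (2 * (s + \<epsilon>)) * (cmod (B4 t u v w \<phi> k))^2"
    have pk: "?f k \<le> c^2 * (infsum ?x2 (nonres k) * Y)" if "k \<in> Z0" for k
      using perk(3)[OF u v w ph that assms(1,2,3) Hb, of t] unfolding pw_sq c_def Y_def .
    have sk: "B41_term t u v w \<phi> summable_on nonres k \<and> B42_term t u v w \<phi> summable_on nonres k" if "k \<in> Z0" for k
      using perk(1,2)[OF u v w ph that assms(1,2,3) Hb, of t] by blast
    have xsum: "?x2 summable_on A" "infsum ?x2 A \<le> 32 * Hs_sq s w * H0^3" if "A \<subseteq> Qall" for A
      using nonneg_fin_bound[of A ?x2 "32 * Hs_sq s w * H0^3"] xq_sum[OF w _ _ assms(2,3) Hb] that by auto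
    have fin: "sum ?f K \<le> D" if K: "finite K" "K \<subseteq> Z0" for K
    proof -
      have "sum ?f K \<le> (\<Sum>k\<in>K. c^2 * (infsum ?x2 (nonres k) * Y))"
        by (rule sum_mono) (use K pk in auto)
      also have "\<dots> = c^2 * Y * (\<Sum>k\<in>K. infsum ?x2 (nonres k))"
        by (simp add: sum_distrib_left algebra_simps)
      also have "(\<Sum>k\<in>K. infsum ?x2 (nonres k)) = infsum ?x2 (\<Union>k\<in>K. nonres k)"
        by (rule sum_infsum[OF K(1)]) (use xsum(1) nonres_sub in \<open>auto simp: nonres_def\<close>)
      also have "\<dots> \<le> 32 * Hs_sq s w * H0^3"
        by (rule xsum(2)) (use nonres_sub in auto)
      finally show ?thesis unfolding D_def using cnn Ynn
        by (simp add: mult_left_mono)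
    qed
    have fnn: "\<And>k. 0 \<le> ?f k" by simp
    have inH: "in_Hs (s + \<epsilon>) (B4 t u v w \<phi>)"
      unfolding in_Hs_def by (rule nonneg_fin_bound(1)[of Z0 ?f D]) (use fin in auto)
    have HD: "Hs_sq (s + \<epsilon>) (B4 t u v w \<phi>) \<le> D"
      unfolding Hs_sq_def by (rule nonneg_fin_bound(2)[of Z0 ?f D]) (use fin in auto)
    have "Hs_norm (s + \<epsilon>) (B4 t u v w \<phi>) \<le> sqrt D"
      unfolding Hs_norm_def by (rule real_sqrt_le_mono[OF HD])
    also have "D = c4^2 * (Hs_sq s u * Hs_sq s v * Hs_sq s w * Hs_sq s \<phi>)"
      unfolding D_def c4_def Y_def using H0nn by (simp add: power_mult_distrib real_sqrt_pow2 algebra_simps)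
    also have "sqrt \<dots> = c4 * Hs_norm s u * Hs_norm s v * Hs_norm s w * Hs_norm s \<phi>"
      using c4nn by (simp add: Hs_norm_def real_sqrt_mult)
    finally show "(\<forall>k\<in>Z0. B41_term t u v w \<phi> summable_on nonres k
                  \<and> B42_term t u v w \<phi> summable_on nonres k)
         \<and> in_Hs (s + \<epsilon>) (B4 t u v w \<phi>)
         \<and> Hs_norm (s + \<epsilon>) (B4 t u v w \<phi>)
             \<le> c4 * Hs_norm s u * Hs_norm s v * Hs_norm s w * Hs_norm s \<phi>"
      using sk inH by blast
  qed
qed


end
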